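(* Let $F$ be a subfield of $\mathbb{R}$, $r\in F$, and $n$ a positive integer. There is a quantifier-free formula $\theta(x,u)$ in the language of $T_{\mathrm{comm}}[F]$, in disjunctive normal form with at most $n$ disjuncts, such that $$T_{\mathrm{mult}}[F]\cup\{0\le x,\;x\le r,\;u=x^2\}\vdash\theta\quad\text{and}\quad T_{\mathrm{add}}[F]\cup\{u<2x-1\}\cup\{\theta\}\vdash\bot,$$ if and only if $r\le n/(n+1)$.
   Context: For $a\in F$, $f_a$ is a unary function symbol interpreted as $f_a(x)=ax$; a constant $c\in F$ is denoted by $f_c(1)$, $x^2$ denotes $x\times x$ and $2x$ denotes $f_2(x)$. $T_{\mathrm{add}}[F]$ is the set of sentences true in $(\mathbb{R},0,1,+,-,<,(f_a)_{a\in F})$, $T_{\mathrm{mult}}[F]$ the set of sentences true in $(\mathbb{R},0,1,\times,\div,<,(f_a)_{a\in F})$ with $x\div0=0$, and $T_{\mathrm{comm}}[F]=T_{\mathrm{add}}[F]\cap T_{\mathrm{mult}}[F]$, the theory of $(\mathbb{R},0,1,<,(f_a)_{a\in F})$. Free variables $x,u$ are treated as constants in the derivations. *)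

theory Defs
  imports Complex_Main
begin

definition real_subfield :: "real set \<Rightarrow> bool" where
  "real_subfield F \<longleftrightarrow> 0 \<in> F \<and> 1 \<in> F \<and>
     (\<forall>a\<in>F. \<forall>b\<in>F. a + b \<in> F \<and> a - b \<in> F \<and> a * b \<in> F) \<and>
     (\<forall>a\<in>F. a \<noteq> 0 \<longrightarrow> inverse a \<in> F)"

section \<open>Syntax: one big signature; sublanguages are carved out below\<close>

text \<open>Terms.  CX and CU are the two extra constants x, u.  Fa a t is f_a(t).\<close>
datatype tm = Var nat | CX | CU | Zero | One
  | Add tm tm | Sub tm tm | Mul tm tm | Dvd tm tm | Fa real tm

datatype fm = Bot | Eq tm tm | Less tm tm | Not fm | And fm fm | Or fm fm | Imp fm fm
  | All nat fm | Ex nat fm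

datatype lang = LComm | LAdd | LMult

fun tm_in :: "lang \<Rightarrow> real set \<Rightarrow> tm \<Rightarrow> bool" where
  "tm_in L F (Var v) = True"
| "tm_in L F CX = True"
| "tm_in L F CU = True"
| "tm_in L F Zero = True"
| "tm_in L F One = True"
| "tm_in L F (Add s t) = (L = LAdd \<and> tm_in L F s \<and> tm_in L F t)"
| "tm_in L F (Sub s t) = (L = LAdd \<and> tm_in L F s \<and> tm_in L F t)"
| "tm_in L F (Mul s t) = (L = LMult \<and> tm_in L F s \<and> tm_in L F t)"
| "tm_in L F (Dvd s t) = (L = LMult \<and> tm_in L F s \<and> tm_in L F t)"
| "tm_in L F (Fa a t) = (a \<in> F \<and> tm_in L F t)"

fun fm_in :: "lang \<Rightarrow> real set \<Rightarrow> fm \<Rightarrow> bool" where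
  "fm_in L F Bot = True"
| "fm_in L F (Eq s t) = (tm_in L F s \<and> tm_in L F t)"
| "fm_in L F (Less s t) = (tm_in L F s \<and> tm_in L F t)"
| "fm_in L F (Not p) = fm_in L F p"
| "fm_in L F (And p q) = (fm_in L F p \<and> fm_in L F q)"
| "fm_in L F (Or p q) = (fm_in L F p \<and> fm_in L F q)"
| "fm_in L F (Imp p q) = (fm_in L F p \<and> fm_in L F q)"
| "fm_in L F (All v p) = fm_in L F p"
| "fm_in L F (Ex v p) = fm_in L F p"

fun tm_vars :: "tm \<Rightarrow> nat set" where
  "tm_vars (Var v) = {v}"
| "tm_vars (Add s t) = tm_vars s \<union> tm_vars t"
| "tm_vars (Sub s t) = tm_vars s \<union> tm_vars t"
| "tm_vars (Mul s t) = tm_vars s \<union> tm_vars t"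
| "tm_vars (Dvd s t) = tm_vars s \<union> tm_vars t"
| "tm_vars (Fa a t) = tm_vars t"
| "tm_vars _ = {}"

fun tm_consts :: "tm \<Rightarrow> bool" where
  "tm_consts CX = True"
| "tm_consts CU = True"
| "tm_consts (Add s t) = (tm_consts s \<or> tm_consts t)"
| "tm_consts (Sub s t) = (tm_consts s \<or> tm_consts t)"
| "tm_consts (Mul s t) = (tm_consts s \<or> tm_consts t)"
| "tm_consts (Dvd s t) = (tm_consts s \<or> tm_consts t)"
| "tm_consts (Fa a t) = tm_consts t"
| "tm_consts _ = False"

fun fm_free :: "fm \<Rightarrow> nat set" where
  "fm_free Bot = {}"
| "fm_free (Eq s t) = tm_vars s \<union> tm_vars t"
| "fm_free (Less s t) = tm_vars s \<union> tm_vars t"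
| "fm_free (Not p) = fm_free p"
| "fm_free (And p q) = fm_free p \<union> fm_free q"
| "fm_free (Or p q) = fm_free p \<union> fm_free q"
| "fm_free (Imp p q) = fm_free p \<union> fm_free q"
| "fm_free (All v p) = fm_free p - {v}"
| "fm_free (Ex v p) = fm_free p - {v}"

fun fm_consts :: "fm \<Rightarrow> bool" where
  "fm_consts Bot = False"
| "fm_consts (Eq s t) = (tm_consts s \<or> tm_consts t)"
| "fm_consts (Less s t) = (tm_consts s \<or> tm_consts t)"
| "fm_consts (Not p) = fm_consts p"
| "fm_consts (And p q) = (fm_consts p \<or> fm_consts q)"
| "fm_consts (Or p q) = (fm_consts p \<or> fm_consts q)"
| "fm_consts (Imp p q) = (fm_consts p \<or> fm_consts q)"
| "fm_consts (All v p) = fm_consts p"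
| "fm_consts (Ex v p) = fm_consts p"

definition sentence :: "fm \<Rightarrow> bool" where
  "sentence p \<longleftrightarrow> fm_free p = {} \<and> \<not> fm_consts p"

record 'a struc =
  s_dom :: "'a set"
  s_zero :: 'a
  s_one :: 'a
  s_add :: "'a \<Rightarrow> 'a \<Rightarrow> 'a"
  s_sub :: "'a \<Rightarrow> 'a \<Rightarrow> 'a"
  s_mul :: "'a \<Rightarrow> 'a \<Rightarrow> 'a"
  s_div :: "'a \<Rightarrow> 'a \<Rightarrow> 'a"
  s_less :: "'a \<Rightarrow> 'a \<Rightarrow> bool"
  s_fa :: "real \<Rightarrow> 'a \<Rightarrow> 'a"
  s_x :: 'a
  s_u :: 'a

definition wf_struc :: "'a struc \<Rightarrow> bool" where
  "wf_struc M \<longleftrightarrow> s_dom M \<noteq> {} \<and> s_zero M \<in> s_dom M \<and> s_one M \<in> s_dom M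
     \<and> s_x M \<in> s_dom M \<and> s_u M \<in> s_dom M
     \<and> (\<forall>a\<in>s_dom M. \<forall>b\<in>s_dom M. s_add M a b \<in> s_dom M \<and> s_sub M a b \<in> s_dom M
            \<and> s_mul M a b \<in> s_dom M \<and> s_div M a b \<in> s_dom M)
     \<and> (\<forall>c. \<forall>a\<in>s_dom M. s_fa M c a \<in> s_dom M)"

fun eval :: "'a struc \<Rightarrow> (nat \<Rightarrow> 'a) \<Rightarrow> tm \<Rightarrow> 'a" where
  "eval M e (Var v) = e v"
| "eval M e CX = s_x M"
| "eval M e CU = s_u M"
| "eval M e Zero = s_zero M"
| "eval M e One = s_one M"
| "eval M e (Add s t) = s_add M (eval M e s) (eval M e t)"
| "eval M e (Sub s t) = s_sub M (eval M e s) (eval M e t)"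
| "eval M e (Mul s t) = s_mul M (eval M e s) (eval M e t)"
| "eval M e (Dvd s t) = s_div M (eval M e s) (eval M e t)"
| "eval M e (Fa a t) = s_fa M a (eval M e t)"

fun sat :: "'a struc \<Rightarrow> (nat \<Rightarrow> 'a) \<Rightarrow> fm \<Rightarrow> bool" where
  "sat M e Bot = False"
| "sat M e (Eq s t) = (eval M e s = eval M e t)"
| "sat M e (Less s t) = s_less M (eval M e s) (eval M e t)"
| "sat M e (Not p) = (\<not> sat M e p)"
| "sat M e (And p q) = (sat M e p \<and> sat M e q)"
| "sat M e (Or p q) = (sat M e p \<or> sat M e q)"
| "sat M e (Imp p q) = (sat M e p \<longrightarrow> sat M e q)"
| "sat M e (All v p) = (\<forall>a\<in>s_dom M. sat M (e(v := a)) p)"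
| "sat M e (Ex v p) = (\<exists>a\<in>s_dom M. sat M (e(v := a)) p)"

definition holds :: "'a struc \<Rightarrow> fm \<Rightarrow> bool" where
  "holds M p \<longleftrightarrow> (\<forall>e. (\<forall>v. e v \<in> s_dom M) \<longrightarrow> sat M e p)"

text \<open>Derivability T \<union> G \<turnstile> p, rendered via the completeness theorem as semantic
  consequence.  Models are taken with carrier a subset of a set of size continuum,
  which suffices by Loewenheim--Skolem since the language has size at most continuum.\<close>
definition entails :: "fm set \<Rightarrow> fm set \<Rightarrow> fm \<Rightarrow> bool" where
  "entails T G p \<longleftrightarrow> (\<forall>M :: real struc. wf_struc M \<longrightarrow>
     (\<forall>s\<in>T. holds M s) \<longrightarrow> (\<forall>g\<in>G. holds M g) \<longrightarrow> holds M p)"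

definition R_add :: "real struc" where
  "R_add = \<lparr>s_dom = UNIV, s_zero = 0, s_one = 1, s_add = (+), s_sub = (-),
     s_mul = (\<lambda>_ _. 0), s_div = (\<lambda>_ _. 0), s_less = (<), s_fa = (*), s_x = 0, s_u = 0\<rparr>"

definition R_mult :: "real struc" where
  "R_mult = \<lparr>s_dom = UNIV, s_zero = 0, s_one = 1, s_add = (\<lambda>_ _. 0), s_sub = (\<lambda>_ _. 0),
     s_mul = (*), s_div = (/), s_less = (<), s_fa = (*), s_x = 0, s_u = 0\<rparr>"
  \<comment> \<open>Isabelle's real division already satisfies x / 0 = 0\<close>

definition T_add :: "real set \<Rightarrow> fm set" where
  "T_add F = {p. sentence p \<and> fm_in LAdd F p \<and> holds R_add p}"

definition T_mult :: "real set \<Rightarrow> fm set" where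
  "T_mult F = {p. sentence p \<and> fm_in LMult F p \<and> holds R_mult p}"

fun literal :: "fm \<Rightarrow> bool" where
  "literal (Eq s t) = True"
| "literal (Less s t) = True"
| "literal (Not (Eq s t)) = True"
| "literal (Not (Less s t)) = True"
| "literal _ = False"

definition conj_list :: "fm list \<Rightarrow> fm" where
  "conj_list ls = foldr And ls (Not Bot)"

definition dnf :: "fm list list \<Rightarrow> fm" where
  "dnf ds = foldr Or (map conj_list ds) Bot"

definition Le :: "tm \<Rightarrow> tm \<Rightarrow> fm" where
  "Le s t = Or (Less s t) (Eq s t)"

definition cst :: "real \<Rightarrow> tm" where
  "cst c = Fa c One"

end

theory Submission imports Defs begin

fun cx :: "tm \<Rightarrow> real" where
  "cx CX = 1" | "cx (Fa a t) = a * cx t" | "cx _ = 0"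
fun cu :: "tm \<Rightarrow> real" where
  "cu CU = 1" | "cu (Fa a t) = a * cu t" | "cu _ = 0"
fun cc :: "tm \<Rightarrow> real" where
  "cc One = 1" | "cc (Fa a t) = a * cc t" | "cc _ = 0"

definition Dv :: "tm \<Rightarrow> tm \<Rightarrow> real \<Rightarrow> real \<Rightarrow> real" where
  "Dv s t a b = (cx s - cx t) * a + (cu s - cu t) * b + (cc s - cc t)"

fun litsem :: "fm \<Rightarrow> real \<Rightarrow> real \<Rightarrow> bool" where
  "litsem (Eq s t) a b = (Dv s t a b = 0)"
| "litsem (Less s t) a b = (Dv s t a b < 0)"
| "litsem (Not (Eq s t)) a b = (Dv s t a b \<noteq> 0)"
| "litsem (Not (Less s t)) a b = (\<not> Dv s t a b < 0)"
| "litsem _ a b = False"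

fun bad :: "real \<Rightarrow> fm \<Rightarrow> real" where
  "bad q (Not (Eq s t)) = (if cu s - cu t = 0 then 0
      else - ((cx s - cx t) * q + (cc s - cc t)) / ((cu s - cu t) * q))"
| "bad q _ = 0"

lemma eval_lin:
  "tm_in LComm F t \<Longrightarrow> tm_vars t = {} \<Longrightarrow> s_zero M = 0 \<Longrightarrow> s_one M = 1 \<Longrightarrow>
   s_fa M = (*) \<Longrightarrow> eval M e t = cx t * s_x M + cu t * s_u M + cc t"
  by (induction t) (auto simp: algebra_simps)

lemma one_kind:
  "tm_in LComm F t \<Longrightarrow> tm_vars t = {} \<Longrightarrow>
   (cu t = 0 \<and> cc t = 0) \<or> (cx t = 0 \<and> cc t = 0) \<or> (cx t = 0 \<and> cu t = 0)"
  by (induction t) auto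

lemma sat_lit:
  assumes "literal l" "fm_in LComm F l" "fm_free l = {}" "s_zero M = 0" "s_one M = 1"
    "s_fa M = (*)" "s_less M = (<)"
  shows "sat M e l = litsem l (s_x M) (s_u M)"
proof -
  obtain s t where st: "l = Eq s t \<or> l = Less s t \<or> l = Not (Eq s t) \<or> l = Not (Less s t)"
    using assms(1) by (cases l rule: literal.cases) auto
  have ts: "tm_in LComm F s" "tm_vars s = {}" "tm_in LComm F t" "tm_vars t = {}"
    using st assms(2,3) by auto
  have es: "eval M e s = cx s * s_x M + cu s * s_u M + cc s"
    using eval_lin[OF ts(1,2) assms(4-6)] .
  have et: "eval M e t = cx t * s_x M + cu t * s_u M + cc t"
    using eval_lin[OF ts(3,4) assms(4-6)] .
  have d: "eval M e s - eval M e t = Dv s t (s_x M) (s_u M)"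
    unfolding es et Dv_def by (simp add: algebra_simps)
  from st show ?thesis
    using d assms(7) by (elim disjE) (simp_all, linarith+)
qed

lemma core:
  fixes A B C p q \<rho> :: real
  assumes "A = 0 \<or> B = 0 \<or> C = 0" "0 < p" "p < \<rho>" "\<rho> < q"
  shows "\<exists>\<alpha> \<beta>. \<alpha> \<ge> 0 \<and> \<beta> \<ge> 0 \<and> \<alpha> + \<beta> > 0 \<and>
     A*q + B*(\<rho>*q) + C = \<alpha>*(A*p + B*(p*p) + C) + \<beta>*(A*q + B*(q*q) + C)"
proof -
  have q: "q > 0" "q - p > 0" using assms by auto
  consider "C = 0" | "B = 0" | "A = 0" using assms(1) by blast
  then show ?thesis
  proof cases
    case 1
    let ?a = "q*(q-\<rho>)/(p*(q-p))" and ?b = "(\<rho>-p)/(q-p)"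
    have "?a \<ge> 0" "?b > 0" using assms q by auto
    moreover have "A*q + B*(\<rho>*q) + C = ?a*(A*p + B*(p*p) + C) + ?b*(A*q + B*(q*q) + C)"
    proof -
      have ne: "p \<noteq> 0" "q - p \<noteq> 0" using q assms(2) by auto
      have e1: "?a*(A*p + B*(p*p) + C) = (q*(q-\<rho>)*(A+B*p))/(q-p)"
        using 1 ne by (simp add: field_simps)
      have e2: "?b*(A*q + B*(q*q) + C) = ((\<rho>-p)*q*(A+B*q))/(q-p)"
        using 1 ne by (simp add: field_simps)
      have "?a*(A*p + B*(p*p) + C) + ?b*(A*q + B*(q*q) + C)
          = (q*(q-\<rho>)*(A+B*p) + (\<rho>-p)*q*(A+B*q))/(q-p)"
        unfolding e1 e2 by (simp add: add_divide_distrib)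
      also have "q*(q-\<rho>)*(A+B*p) + (\<rho>-p)*q*(A+B*q) = (q-p)*(A*q + B*(\<rho>*q))"
        by (simp add: algebra_simps)
      finally show ?thesis using 1 ne by simp
    qed
    ultimately show ?thesis by (intro exI[of _ ?a] exI[of _ ?b]) auto
  next
    case 2
    show ?thesis by (intro exI[of _ 0] exI[of _ 1]) (simp add: 2)
  next
    case 3
    have pq: "q*q - p*p > 0" using assms q by (simp add: mult_strict_mono)
    have rq: "\<rho>*q - p*p > 0" using assms q
      by (smt (verit) mult_strict_mono mult_strict_right_mono)
    let ?a = "(q*q-\<rho>*q)/(q*q-p*p)" and ?b = "(\<rho>*q-p*p)/(q*q-p*p)"
    have "q*q - \<rho>*q > 0" using assms q by simp
    hence "?a \<ge> 0" "?b > 0" using pq rq by auto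
    moreover have "A*q + B*(\<rho>*q) + C = ?a*(A*p + B*(p*p) + C) + ?b*(A*q + B*(q*q) + C)"
    proof -
      have ne: "q*q-p*p \<noteq> 0" using pq by auto
      have "?a*(A*p + B*(p*p) + C) + ?b*(A*q + B*(q*q) + C)
          = ((q*q-\<rho>*q)*(B*(p*p) + C) + (\<rho>*q-p*p)*(B*(q*q)+C))/(q*q-p*p)"
        using 3 ne by (simp add: add_divide_distrib)
      also have "(q*q-\<rho>*q)*(B*(p*p) + C) + (\<rho>*q-p*p)*(B*(q*q)+C) = (q*q-p*p)*(B*(\<rho>*q) + C)"
        by (simp add: algebra_simps)
      finally show ?thesis using 3 ne by simp
    qed
    ultimately show ?thesis by (intro exI[of _ ?a] exI[of _ ?b]) auto
  qed
qed

lemma comb_sign: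
  fixes \<alpha> \<beta> P Q :: real
  assumes "\<alpha> \<ge> 0" "\<beta> \<ge> 0" "\<alpha> + \<beta> > 0"
  shows "(P < 0 \<and> Q < 0 \<longrightarrow> \<alpha>*P+\<beta>*Q < 0)" "(P = 0 \<and> Q = 0 \<longrightarrow> \<alpha>*P+\<beta>*Q = 0)"
    "(\<not> P < 0 \<and> \<not> Q < 0 \<longrightarrow> \<not> \<alpha>*P+\<beta>*Q < 0)"
proof -
  show "(P < 0 \<and> Q < 0 \<longrightarrow> \<alpha>*P+\<beta>*Q < 0)"
  proof
    assume h: "P < 0 \<and> Q < 0"
    show "\<alpha>*P+\<beta>*Q < 0"
    proof (cases "\<alpha> > 0")
      case True
      have "\<alpha>*P < 0" using True h by (simp add: mult_pos_neg)
      moreover have "\<beta>*Q \<le> 0" using assms h by (simp add: mult_nonneg_nonpos)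
      ultimately show ?thesis by simp
    next
      case False
      hence "\<beta> > 0" using assms by simp
      hence "\<beta>*Q < 0" using h by (simp add: mult_pos_neg)
      moreover have "\<alpha>*P \<le> 0" using assms h by (simp add: mult_nonneg_nonpos)
      ultimately show ?thesis by simp
    qed
  qed
  show "(P = 0 \<and> Q = 0 \<longrightarrow> \<alpha>*P+\<beta>*Q = 0)" by simp
  show "(\<not> P < 0 \<and> \<not> Q < 0 \<longrightarrow> \<not> \<alpha>*P+\<beta>*Q < 0)"
    using assms by (simp add: not_less)
qed

lemma lit_mid:
  assumes "literal l" "fm_in LComm F l" "fm_free l = {}" "0 < p" "p < \<rho>" "\<rho> < q"
    "\<rho> \<noteq> bad q l" "litsem l p (p*p)" "litsem l q (q*q)"
  shows "litsem l q (\<rho>*q)"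
proof -
  obtain s t where st: "l = Eq s t \<or> l = Less s t \<or> l = Not (Eq s t) \<or> l = Not (Less s t)"
    using assms(1) by (cases l rule: literal.cases) auto
  have ts: "tm_in LComm F s" "tm_vars s = {}" "tm_in LComm F t" "tm_vars t = {}"
    using st assms(2,3) by auto
  define A B C where "A = cx s - cx t" and "B = cu s - cu t" and "C = cc s - cc t"
  have abc: "A = 0 \<or> B = 0 \<or> C = 0"
    using one_kind[OF ts(1,2)] one_kind[OF ts(3,4)] unfolding A_def B_def C_def by auto
  have D: "\<And>a b. Dv s t a b = A*a + B*b + C" by (simp add: Dv_def A_def B_def C_def)
  obtain \<alpha> \<beta> where ab: "\<alpha> \<ge> 0" "\<beta> \<ge> 0" "\<alpha> + \<beta> > 0"
     "A*q + B*(\<rho>*q) + C = \<alpha>*(A*p + B*(p*p) + C) + \<beta>*(A*q + B*(q*q) + C)"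
    using core[OF abc assms(4-6)] by blast
  note cs = comb_sign[OF ab(1-3), of "A*p + B*(p*p) + C" "A*q + B*(q*q) + C"]
  from st show ?thesis
  proof (elim disjE)
    assume l: "l = Eq s t" show ?thesis using assms(8,9) cs ab(4) unfolding l by (simp add: D)
  next
    assume l: "l = Less s t" show ?thesis using assms(8,9) cs ab(4) unfolding l by (simp add: D)
  next
    assume l: "l = Not (Less s t)" show ?thesis using assms(8,9) cs ab(4) unfolding l by (simp add: D)
  next
    assume l: "l = Not (Eq s t)"
    have qv: "A*q + B*(q*q) + C \<noteq> 0" using assms(9) unfolding l by (simp add: D)
    have rb: "\<rho> \<noteq> (if B = 0 then 0 else - (A*q + C) / (B*q))"
      using assms(7) unfolding l bad.simps A_def B_def C_def by simp_all
    have q0: "q > 0" using assms(4-6) by simp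
    show ?thesis unfolding l
    proof (simp add: D, cases "B = 0")
      case True thus "A * q + B * (\<rho> * q) + C \<noteq> 0" using qv by simp
    next
      case False
      show "A * q + B * (\<rho> * q) + C \<noteq> 0"
      proof
        assume h: "A * q + B * (\<rho> * q) + C = 0"
        have "\<rho> = - (A*q + C) / (B*q)" using h False q0 by (simp add: field_simps)
        thus False using rb False by simp
      qed
    qed
  qed
qed

lemma pair_lemma:
  assumes val: "\<forall>l\<in>set c. literal l \<and> fm_in LComm F l \<and> fm_free l = {}"
    and p: "0 < p" "p < q" "1 < q * (2 - p)"
    and hp: "\<forall>l\<in>set c. litsem l p (p*p)" and hq: "\<forall>l\<in>set c. litsem l q (q*q)"
  shows "\<exists>a b. b < 2*a - 1 \<and> (\<forall>l\<in>set c. litsem l a b)"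
proof -
  define m where "m = min q (2 - 1/q)"
  have q0: "q > 0" using p by simp
  have "p < 2 - 1/q" using p q0 by (simp add: field_simps)
  hence pm: "p < m" using p unfolding m_def by simp
  have "infinite ({p<..<m} - bad q ` set c)"
    using infinite_Ioo[OF pm] by (simp add: Diff_infinite_finite)
  then obtain \<rho> where \<rho>: "\<rho> \<in> {p<..<m}" "\<rho> \<notin> bad q ` set c"
    by (metis Diff_iff finite.emptyI infinite_imp_nonempty ex_in_conv)
  have r1: "p < \<rho>" "\<rho> < q" "\<rho> < 2 - 1/q" using \<rho>(1) unfolding m_def by auto
  have "\<rho> * q < (2 - 1/q) * q" using r1(3) q0 by simp
  hence "\<rho> * q < 2*q - 1" using q0 by (simp add: algebra_simps)
  moreover have "\<forall>l\<in>set c. litsem l q (\<rho>*q)"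
  proof
    fix l assume l: "l \<in> set c"
    have "\<rho> \<noteq> bad q l" using \<rho>(2) l by auto
    thus "litsem l q (\<rho>*q)"
      using lit_mid[of l F p \<rho> q] val l p(1) r1(1,2) hp hq by blast
  qed
  ultimately show ?thesis by blast
qed


lemma sat_conj_list: "sat M e (conj_list c) = (\<forall>l\<in>set c. sat M e l)"
  by (induction c) (auto simp: conj_list_def)
lemma sat_dnf: "sat M e (dnf ds) = (\<exists>c\<in>set ds. \<forall>l\<in>set c. sat M e l)"
  by (induction ds) (auto simp: dnf_def sat_conj_list)
lemma free_conj_list: "fm_free (conj_list c) = (\<Union>l\<in>set c. fm_free l)"
  by (induction c) (auto simp: conj_list_def)
lemma free_dnf: "fm_free (dnf ds) = (\<Union>c\<in>set ds. \<Union>l\<in>set c. fm_free l)"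
  by (induction ds) (auto simp: dnf_def free_conj_list)
lemma cnsts_conj_list: "fm_consts (conj_list c) = (\<exists>l\<in>set c. fm_consts l)"
  by (induction c) (auto simp: conj_list_def)
lemma cnsts_dnf: "fm_consts (dnf ds) = (\<exists>c\<in>set ds. \<exists>l\<in>set c. fm_consts l)"
  by (induction ds) (auto simp: dnf_def cnsts_conj_list)
lemma in_conj_list: "fm_in L F (conj_list c) = (\<forall>l\<in>set c. fm_in L F l)"
  by (induction c) (auto simp: conj_list_def)
lemma in_dnf: "fm_in L F (dnf ds) = (\<forall>c\<in>set ds. \<forall>l\<in>set c. fm_in L F l)"
  by (induction ds) (auto simp: dnf_def in_conj_list)

lemma eval_upd: "\<not> tm_consts t \<Longrightarrow> eval (M\<lparr>s_x := a, s_u := b\<rparr>) e t = eval M e t"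
  by (induction t) auto
lemma sat_upd: "\<not> fm_consts p \<Longrightarrow> sat (M\<lparr>s_x := a, s_u := b\<rparr>) e p = sat M e p"
  by (induction p arbitrary: e) (auto simp: eval_upd)

lemma holds_upd: "sentence p \<Longrightarrow> holds (M\<lparr>s_x := a, s_u := b\<rparr>) p = holds M p"
  unfolding holds_def sentence_def by (simp add: sat_upd)

lemma nat_in_F: "real_subfield F \<Longrightarrow> real k \<in> F"
  by (induction k) (auto simp: real_subfield_def)
lemma div_in_F: "real_subfield F \<Longrightarrow> a \<in> F \<Longrightarrow> b \<in> F \<Longrightarrow> a / b \<in> F"
  unfolding real_subfield_def by (cases "b = 0") (auto simp: divide_inverse)

lemma xk_pair:
  fixes T1 T2 :: real
  assumes "1 < T1" "T1 + 1 < T2"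
  shows "1 < (1 - 1/T2) * (2 - (1 - 1/T1))"
proof -
  have "(1 - 1/T2) * (2 - (1 - 1/T1)) = ((T2 - 1) * (T1 + 1)) / (T1 * T2)"
    using assms by (simp add: field_simps)
  moreover have "(T2 - 1) * (T1 + 1) > T1 * T2" using assms by (simp add: algebra_simps)
  moreover have "T1 * T2 > 0" using assms by simp
  ultimately show ?thesis by simp
qed

lemma choose_j:
  fixes a :: real and n :: nat
  assumes "0 \<le> a" "a \<le> real n / (real n + 1)" "n \<ge> 1"
  shows "\<exists>j<n. real j / (real j + 1) * a \<le> a * a \<and> a \<le> (real j + 1) / (real j + 2)"
proof -
  have a1: "a < 1" using assms(2) by (smt (verit) divide_less_eq_1_pos of_nat_0_le_iff)
  define y where "y = a / (1 - a)"
  have yn: "y \<le> n" using assms a1 unfolding y_def by (simp add: field_simps)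
  have y0: "y \<ge> 0" using assms a1 unfolding y_def by simp
  define m where "m = nat \<lfloor>y\<rfloor>"
  have m1: "real m \<le> y" "y < real m + 1" using y0 unfolding m_def by linarith+
  define j where "j = min (n - 1) m"
  have jn: "j < n" using assms(3) unfolding j_def by simp
  have jy: "real j \<le> y \<and> y \<le> real j + 1"
  proof (cases "m \<le> n - 1")
    case True thus ?thesis using m1 unfolding j_def by simp
  next
    case False
    hence "m \<ge> n" by simp
    hence "y = n" using m1 yn by linarith
    thus ?thesis using False assms(3) unfolding j_def by simp
  qed
  have c1: "real j * (1 - a) \<le> a" using jy a1 unfolding y_def by (simp add: field_simps)
  have c2: "a \<le> (real j + 1) * (1 - a)" using jy a1 unfolding y_def by (simp add: field_simps)
  have "real j / (real j + 1) \<le> a" using c1 by (simp add: field_simps algebra_simps)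
  hence "real j / (real j + 1) * a \<le> a * a" using assms(1) mult_right_mono by blast
  moreover have "a \<le> (real j + 1) / (real j + 2)" using c2 by (simp add: field_simps algebra_simps)
  ultimately show ?thesis using jn by blast
qed

lemma tangent_ok:
  fixes a b :: real and j :: nat
  assumes "real j / (real j + 1) * a \<le> b" "a \<le> (real j + 1) / (real j + 2)"
  shows "\<not> b < 2*a - 1"
proof -
  have e: "2 - real j / (real j + 1) = (real j + 2) / (real j + 1)" by (simp add: field_simps)
  have "(2 - real j / (real j + 1)) * a \<le> (2 - real j / (real j + 1)) * ((real j + 1) / (real j + 2))"
    using assms(2) unfolding e by (intro mult_left_mono) auto
  also have "\<dots> = 1" unfolding e
  proof -
    have "real j + 1 > 0" "real j + 2 > 0" by simp_all
    thus "(real j + 2) / (real j + 1) * ((real j + 1) / (real j + 2)) = 1" by simp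
  qed
  finally show ?thesis using assms(1) by (simp add: algebra_simps)
qed

theorem theorem5p4:
  fixes F :: "real set" and r :: real and n :: nat
  assumes "real_subfield F" and "r \<in> F" and "n \<ge> 1"
  shows "(\<exists>ds :: fm list list.
            length ds \<le> n
          \<and> (\<forall>c\<in>set ds. \<forall>l\<in>set c. literal l \<and> fm_in LComm F l \<and> fm_free l = {})
          \<and> entails (T_mult F) {Le Zero CX, Le CX (cst r), Eq CU (Mul CX CX)} (dnf ds)
          \<and> entails (T_add F) {Less CU (Sub (Fa 2 CX) One), dnf ds} Bot)
         \<longleftrightarrow> r \<le> real n / (real n + 1)"
proof
  assume "\<exists>ds :: fm list list.
            length ds \<le> n
          \<and> (\<forall>c\<in>set ds. \<forall>l\<in>set c. literal l \<and> fm_in LComm F l \<and> fm_free l = {})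
          \<and> entails (T_mult F) {Le Zero CX, Le CX (cst r), Eq CU (Mul CX CX)} (dnf ds)
          \<and> entails (T_add F) {Less CU (Sub (Fa 2 CX) One), dnf ds} Bot"
  then obtain ds where L: "length ds \<le> n"
    and V: "\<forall>c\<in>set ds. \<forall>l\<in>set c. literal l \<and> fm_in LComm F l \<and> fm_free l = {}"
    and EM: "entails (T_mult F) {Le Zero CX, Le CX (cst r), Eq CU (Mul CX CX)} (dnf ds)"
    and EA: "entails (T_add F) {Less CU (Sub (Fa 2 CX) One), dnf ds} Bot"
    by blast
  show "r \<le> real n / (real n + 1)"
  proof (rule ccontr)
    assume "\<not> r \<le> real n / (real n + 1)"
    hence rgt: "real n / (real n + 1) < r" by simp
    have cover: "\<exists>c\<in>set ds. \<forall>l\<in>set c. litsem l x (x*x)" if x: "0 \<le> x" "x \<le> r" for x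
    proof -
      define M where "M = R_mult\<lparr>s_x := x, s_u := x*x\<rparr>"
      have wf: "wf_struc M" unfolding M_def wf_struc_def R_mult_def by simp
      have T: "\<forall>s\<in>T_mult F. holds M s" unfolding M_def T_mult_def by (auto simp: holds_upd)
      have G: "\<forall>g\<in>{Le Zero CX, Le CX (cst r), Eq CU (Mul CX CX)}. holds M g"
        using x unfolding M_def holds_def Le_def cst_def R_mult_def by auto
      have "holds M (dnf ds)" using EM wf T G unfolding entails_def by blast
      hence "sat M (\<lambda>_. 0) (dnf ds)" unfolding holds_def M_def R_mult_def by simp
      then obtain c where c: "c \<in> set ds" "\<forall>l\<in>set c. sat M (\<lambda>_. 0) l" by (auto simp: sat_dnf)
      have "\<forall>l\<in>set c. litsem l x (x*x)"
      proof
        fix l assume l: "l \<in> set c"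
        have "sat M (\<lambda>_. 0) l = litsem l (s_x M) (s_u M)"
          using V c(1) l by (intro sat_lit[of l F]) (auto simp: M_def R_mult_def)
        thus "litsem l x (x*x)" using c(2) l by (simp add: M_def)
      qed
      thus ?thesis using c(1) by blast
    qed
    have avoid: "\<not> (\<forall>l\<in>set c. litsem l a b)" if ab: "b < 2*a - 1" "c \<in> set ds" for a b c
    proof
      assume all: "\<forall>l\<in>set c. litsem l a b"
      define M where "M = R_add\<lparr>s_x := a, s_u := b\<rparr>"
      have wf: "wf_struc M" unfolding M_def wf_struc_def R_add_def by simp
      have T: "\<forall>s\<in>T_add F. holds M s" unfolding M_def T_add_def by (auto simp: holds_upd)
      have G1: "holds M (Less CU (Sub (Fa 2 CX) One))"
        using ab unfolding M_def holds_def R_add_def by auto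
      have G2: "holds M (dnf ds)"
        unfolding holds_def
      proof (intro allI impI)
        fix e :: "nat \<Rightarrow> real"
        have "\<forall>l\<in>set c. sat M e l"
        proof
          fix l assume l: "l \<in> set c"
          have "sat M e l = litsem l (s_x M) (s_u M)"
            using V ab(2) l by (intro sat_lit[of l F]) (auto simp: M_def R_add_def)
          thus "sat M e l" using all l by (simp add: M_def)
        qed
        thus "sat M e (dnf ds)" using ab(2) by (auto simp: sat_dnf)
      qed
      have "holds M Bot" using EA wf T G1 G2 unfolding entails_def by blast
      thus False unfolding holds_def M_def R_add_def by simp
    qed
    define \<gamma> where "\<gamma> = (1 - r) * (real n + 1)"
    have g1: "\<gamma> < 1" using rgt unfolding \<gamma>_def by (simp add: field_simps algebra_simps)
    define \<delta> where "\<delta> = (1 - \<gamma>) / 2"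
    have d0: "\<delta> > 0" using g1 unfolding \<delta>_def by simp
    have gd: "\<gamma> * (1 + \<delta>) \<le> 1"
    proof -
      have "(1 - \<gamma>) * (2 - \<gamma>) \<ge> 0" using g1 by simp
      thus ?thesis unfolding \<delta>_def by (simp add: field_simps algebra_simps power2_eq_square)
    qed
    define T where "T k = (real k + 1) * (1 + \<delta>)" for k
    define xk where "xk k = 1 - 1 / T k" for k
    have T1: "T k > 1" for k
    proof -
      have "(real k + 1) * (1 + \<delta>) \<ge> 1 + \<delta>"
        using d0 mult_right_mono[of 1 "real k + 1" "1 + \<delta>"] by simp
      thus ?thesis using d0 unfolding T_def by linarith
    qed
    have Tlt: "T k + 1 < T l" if "k < l" for k l
    proof -
      have e: "T l - T k = (real l - real k) * (1 + \<delta>)" unfolding T_def by (simp add: algebra_simps)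
      have h1: "1 \<le> real l - real k" using that by simp
      have h2: "1 + \<delta> \<le> (real l - real k) * (1 + \<delta>)"
        using mult_right_mono[OF h1, of "1 + \<delta>", unfolded mult_1] d0 by simp
      show ?thesis using e h2 d0 by linarith
    qed
    have xpos: "0 < xk k" for k using T1[of k] unfolding xk_def by simp
    have xle: "xk k \<le> r" if "k \<le> n" for k
    proof -
      have "(1 - r) * T k \<le> 1"
      proof (cases "1 - r \<le> 0")
        case True thus ?thesis using T1[of k] by (smt (verit) mult_nonpos_nonneg)
      next
        case False
        have "T k \<le> T n" unfolding T_def using that d0 by (intro mult_right_mono) auto
        hence "(1 - r) * T k \<le> (1 - r) * T n" using False by (intro mult_left_mono) auto
        also have "\<dots> = \<gamma> * (1 + \<delta>)" unfolding T_def \<gamma>_def by simp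
        finally show ?thesis using gd by simp
      qed
      hence "1 - r \<le> 1 / T k" using T1[of k] by (simp add: field_simps)
      thus ?thesis unfolding xk_def by simp
    qed
    have xlt: "xk k < xk l" if "k < l" for k l
    proof -
      have "1 / T l < 1 / T k" using T1[of k] Tlt[OF that] by (intro divide_strict_left_mono) auto
      thus ?thesis unfolding xk_def by simp
    qed
    have xpair: "1 < xk l * (2 - xk k)" if "k < l" for k l
      unfolding xk_def using xk_pair[OF T1[of k] Tlt[OF that]] .
    have cov: "\<exists>i. i < length ds \<and> (\<forall>l\<in>set (ds ! i). litsem l (xk k) (xk k * xk k))"
      if kn: "k \<le> n" for k
    proof -
      obtain c where "c \<in> set ds" "\<forall>l\<in>set c. litsem l (xk k) (xk k * xk k)"
        using cover[of "xk k"] xpos[of k] xle[OF kn] by fastforce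
      thus ?thesis by (metis in_set_conv_nth)
    qed
    define f where "f k = (SOME i. i < length ds \<and> (\<forall>l\<in>set (ds ! i). litsem l (xk k) (xk k * xk k)))" for k
    have fk: "f k < length ds \<and> (\<forall>l\<in>set (ds ! f k). litsem l (xk k) (xk k * xk k))"
      if "k \<le> n" for k
      unfolding f_def using someI_ex[OF cov[OF that]] .
    have "f ` {0..n} \<subseteq> {..<length ds}" using fk by auto
    hence "card (f ` {0..n}) \<le> card {..<length ds}" by (intro card_mono) auto
    hence "card (f ` {0..n}) < card {0..n}" using L by simp
    hence "\<not> inj_on f {0..n}" by (rule pigeonhole)
    then obtain k l where kl: "k \<le> n" "l \<le> n" "k \<noteq> l" "f k = f l"
      unfolding inj_on_def by auto
    have "\<exists>k l. k < l \<and> l \<le> n \<and> f k = f l"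
    proof (cases "k < l")
      case True thus ?thesis using kl by blast
    next
      case False thus ?thesis using kl by (intro exI[of _ l] exI[of _ k]) auto
    qed
    then obtain k l where kl2: "k < l" "l \<le> n" "f k = f l" by blast
    define c where "c = ds ! f k"
    have cin: "c \<in> set ds" using fk[of k] kl2 unfolding c_def by simp
    have hp: "\<forall>l'\<in>set c. litsem l' (xk k) (xk k * xk k)" using fk[of k] kl2 unfolding c_def by simp
    have hq: "\<forall>l'\<in>set c. litsem l' (xk l) (xk l * xk l)" using fk[of l] kl2 unfolding c_def by simp
    obtain a b where "b < 2*a - 1" "\<forall>l'\<in>set c. litsem l' a b"
      using pair_lemma[of c F "xk k" "xk l"] V cin xpos[of k] xlt[OF kl2(1)] xpair[OF kl2(1)] hp hq
      by blast
    thus False using avoid cin by blast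
  qed
next
  assume rle: "r \<le> real n / (real n + 1)"
  show "\<exists>ds :: fm list list.
            length ds \<le> n
          \<and> (\<forall>c\<in>set ds. \<forall>l\<in>set c. literal l \<and> fm_in LComm F l \<and> fm_free l = {})
          \<and> entails (T_mult F) {Le Zero CX, Le CX (cst r), Eq CU (Mul CX CX)} (dnf ds)
          \<and> entails (T_add F) {Less CU (Sub (Fa 2 CX) One), dnf ds} Bot"
  proof -
    define kk where "kk j = real j / (real j + 1)" for j :: nat
    define bb where "bb j = (real j + 1) / (real j + 2)" for j :: nat
    define ds where "ds = map (\<lambda>j. [Not (Less CU (Fa (kk j) CX)), Not (Less (cst (bb j)) CX)]) [0..<n]"
    define ds' where "ds' = map (\<lambda>j. [Not (Less (Var 1) (Fa (kk j) (Var 0))),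
                                      Not (Less (cst (bb j)) (Var 0))]) [0..<n]"
    have kkF: "kk j \<in> F" for j
    proof -
      have "real j / real (j + 1) \<in> F" using assms(1) by (intro div_in_F nat_in_F)
      thus ?thesis unfolding kk_def by (simp add: add.commute)
    qed
    have bbF: "bb j \<in> F" for j
    proof -
      have "real (j + 1) / real (j + 2) \<in> F" using assms(1) by (intro div_in_F nat_in_F)
      thus ?thesis unfolding bb_def by (simp add: add.commute)
    qed
    have twoF: "2 \<in> F" using nat_in_F[OF assms(1), of 2] by simp
    have free': "fm_free (dnf ds') \<subseteq> {0, 1}" by (auto simp: free_dnf ds'_def cst_def)
    have cnsts': "\<not> fm_consts (dnf ds')" by (auto simp: cnsts_dnf ds'_def cst_def)
    have rlt1: "r < 1" using rle by (smt (verit) divide_less_eq_1_pos of_nat_0_le_iff)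
    define Hm where "Hm = And (Le Zero (Var 0)) (And (Le (Var 0) (cst r)) (Eq (Var 1) (Mul (Var 0) (Var 0))))"
    define \<sigma>m where "\<sigma>m = All 0 (All 1 (Imp Hm (dnf ds')))"
    define \<sigma>a where "\<sigma>a = All 0 (All 1 (Imp (Less (Var 1) (Sub (Fa 2 (Var 0)) One)) (Not (dnf ds'))))"
    have \<sigma>m_in: "\<sigma>m \<in> T_mult F"
    proof -
      have "sentence \<sigma>m" using free' cnsts'
        unfolding sentence_def \<sigma>m_def Hm_def Le_def cst_def by auto
      moreover have "fm_in LMult F \<sigma>m"
        using kkF bbF assms(2) unfolding \<sigma>m_def Hm_def Le_def
        by (auto simp: in_dnf ds'_def cst_def)
      moreover have "holds R_mult \<sigma>m"
        unfolding holds_def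
      proof (intro allI impI)
        fix e :: "nat \<Rightarrow> real"
        have cj: "\<exists>j<n. kk j * a \<le> a * a \<and> a \<le> bb j" if "0 \<le> a" "a \<le> r" for a
          using choose_j[of a n] that rle assms(3) unfolding kk_def bb_def by auto
        have h: "\<forall>a. (0 < a \<or> 0 = a) \<and> (a < r \<or> a = r) \<longrightarrow>
            (\<exists>j\<in>{0..<n}. \<not> a * a < kk j * a \<and> \<not> bb j < a)"
        proof (intro allI impI)
          fix a :: real assume a: "(0 < a \<or> 0 = a) \<and> (a < r \<or> a = r)"
          then obtain j where j: "j < n" "kk j * a \<le> a * a" "a \<le> bb j"
            using cj[of a] by fastforce
          show "\<exists>j\<in>{0..<n}. \<not> a * a < kk j * a \<and> \<not> bb j < a"
            using j by (intro bexI[of _ j]) (linarith, simp)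
        qed
        have "sat R_mult e \<sigma>m \<longleftrightarrow> (\<forall>a. (0 < a \<or> 0 = a) \<and> (a < r \<or> a = r) \<longrightarrow>
            (\<exists>j\<in>{0..<n}. \<not> a * a < kk j * a \<and> \<not> bb j < a))"
          unfolding \<sigma>m_def Hm_def
          by (simp add: sat_dnf ds'_def R_mult_def Le_def cst_def)
        thus "sat R_mult e \<sigma>m" using h by blast
      qed
      ultimately show ?thesis unfolding T_mult_def by simp
    qed
    have \<sigma>a_in: "\<sigma>a \<in> T_add F"
    proof -
      have "sentence \<sigma>a" using free' cnsts'
        unfolding sentence_def \<sigma>a_def by auto
      moreover have "fm_in LAdd F \<sigma>a"
        using kkF bbF twoF unfolding \<sigma>a_def
        by (auto simp: in_dnf ds'_def cst_def)
      moreover have "holds R_add \<sigma>a"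
        unfolding holds_def
      proof (intro allI impI)
        fix e :: "nat \<Rightarrow> real"
        have "\<not> b < 2*a - 1" if "kk j * a \<le> b" "a \<le> bb j" for a b j
          using tangent_ok[of j a b] that unfolding kk_def bb_def by auto
        hence h: "\<forall>a b. b < 2*a - 1 \<longrightarrow> \<not> (\<exists>j\<in>{0..<n}. \<not> b < kk j * a \<and> \<not> bb j < a)"
          by (meson not_less)
        have "sat R_add e \<sigma>a \<longleftrightarrow> (\<forall>a b. b < 2*a - 1 \<longrightarrow> \<not> (\<exists>j\<in>{0..<n}. \<not> b < kk j * a \<and> \<not> bb j < a))"
          unfolding \<sigma>a_def
          by (simp add: sat_dnf ds'_def R_add_def cst_def)
        thus "sat R_add e \<sigma>a" using h by blast
      qed
      ultimately show ?thesis unfolding T_add_def by simp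
    qed
    have val: "\<forall>c\<in>set ds. \<forall>l\<in>set c. literal l \<and> fm_in LComm F l \<and> fm_free l = {}"
      using kkF bbF by (auto simp: ds_def cst_def)
    have EM: "entails (T_mult F) {Le Zero CX, Le CX (cst r), Eq CU (Mul CX CX)} (dnf ds)"
      unfolding entails_def
    proof (intro allI impI)
      fix M :: "real struc"
      assume wf: "wf_struc M" and T: "\<forall>s\<in>T_mult F. holds M s"
        and G: "\<forall>g\<in>{Le Zero CX, Le CX (cst r), Eq CU (Mul CX CX)}. holds M g"
      have hs: "holds M \<sigma>m" using T \<sigma>m_in by blast
      show "holds M (dnf ds)"
        unfolding holds_def
      proof (intro allI impI)
        fix e :: "nat \<Rightarrow> real" assume e: "\<forall>v. e v \<in> s_dom M"
        have xd: "s_x M \<in> s_dom M" "s_u M \<in> s_dom M" using wf unfolding wf_struc_def by auto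
        have "sat M e \<sigma>m" using hs e unfolding holds_def by blast
        hence "sat M (e(0 := s_x M, 1 := s_u M)) (Imp Hm (dnf ds'))"
          using xd unfolding \<sigma>m_def by simp
        moreover have "sat M e (Le Zero CX)" "sat M e (Le CX (cst r))" "sat M e (Eq CU (Mul CX CX))"
          using G e unfolding holds_def by auto
        ultimately show "sat M e (dnf ds)"
          unfolding Hm_def by (simp add: sat_dnf ds_def ds'_def Le_def cst_def)
      qed
    qed
    have EA: "entails (T_add F) {Less CU (Sub (Fa 2 CX) One), dnf ds} Bot"
      unfolding entails_def
    proof (intro allI impI)
      fix M :: "real struc"
      assume wf: "wf_struc M" and T: "\<forall>s\<in>T_add F. holds M s"
        and G: "\<forall>g\<in>{Less CU (Sub (Fa 2 CX) One), dnf ds}. holds M g"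
      have hs: "holds M \<sigma>a" using T \<sigma>a_in by blast
      have xd: "s_x M \<in> s_dom M" "s_u M \<in> s_dom M" using wf unfolding wf_struc_def by auto
      define e where "e = (\<lambda>_::nat. s_x M)"
      have e: "\<forall>v. e v \<in> s_dom M" using xd unfolding e_def by simp
      have "sat M e \<sigma>a" using hs e unfolding holds_def by blast
      hence "sat M (e(0 := s_x M, 1 := s_u M))
          (Imp (Less (Var 1) (Sub (Fa 2 (Var 0)) One)) (Not (dnf ds')))"
        using xd unfolding \<sigma>a_def by simp
      moreover have "sat M e (Less CU (Sub (Fa 2 CX) One))" "sat M e (dnf ds)"
        using G e unfolding holds_def by auto
      ultimately have False by (auto simp: sat_dnf ds_def ds'_def cst_def)
      thus "holds M Bot" by simp
    qed
    show ?thesis using val EM EA unfolding ds_def by (intro exI[of _ ds]) (simp add: ds_def)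
  qed
qed
end
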